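(* Consider iterative self-improvement with binary reward $s(q,a)\in\{0,1\}$, where at each iteration $t$ one samples $n$ questions $q\sim p_0$, generates one answer $a\sim \pi_{\hat\theta_t}(\cdot\mid q)$ per question, keeps the $n_t\le n$ pairs with $s(q,a)=1$, and sets $\hat\theta_{t+1}$ to the maximum-likelihood estimate over a finite model class $\Pi$ on these accepted pairs; $V_{p_0}(\theta):=\mathbb{E}_{q\sim p_0,\,a\sim\pi_\theta(\cdot\mid q)}[s(q,a)]$ denotes the expected reward. Assume there exist $c\in(0,1)$ and $\gamma\ge 0$ such that for any question distribution $p$ and any model $\theta$ in a small neighborhood $\Theta$ of the pretrained initialization, $\Pr_{q\sim p}[\alpha(\theta,q)<c\,V_p(\theta)]\le\gamma$, where $\alpha(\theta,q):=\Pr_{a\sim\pi_\theta(\cdot\mid q)}[s(q,a)=1]$. Define \[ F(x):=1-\gamma-\frac{c_\delta \nu}{c\sqrt{x-c_{\delta'}\nu}}\quad\text{on } x>c_{\delta'}\nu, \] with $\nu:=\sqrt{1/n}$, $c_\delta:=\sqrt{2\log(|\Pi|\,\delta^{-1})}$, $c_{\delta'}:=\sqrt{\log(\delta'^{-1})/2}$ (so that, with probability at least $1-t(\delta+\delta')$, $V_{p_0}(\hat\theta_t)\ge F^{\circ t}(V_{p_0}(\hat\theta_0))$, where $F^{\circ t}$ is the $t$-fold composition of $F$). Let $\nu$ be sufficiently small such that \[ 0<\frac{c_\delta \nu}{c\,(1-\gamma-c_{\delta'}\nu)^{3/2}}<\frac{2}{3\sqrt{3}}. \] Let $\mathcal I(1,\nu)=(x_-(1,\nu),x_+(1,\nu))\subset(c_{\delta'}\nu,\,1-\gamma)$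 be the open interval whose endpoints $x_-(1,\nu)<x_+(1,\nu)$ are the two solutions of the fixed-point equation $F(x)=x$. Then, for any non-negative integer $t$, $F^{\circ(t+1)}(V_{p_0}(\hat\theta_0))>F^{\circ t}(V_{p_0}(\hat\theta_0))$ and $F^{\circ t}(V_{p_0}(\hat\theta_0))\in\mathcal I(1,\nu)$ hold if and only if $V_{p_0}(\hat\theta_0)\in\mathcal I(1,\nu)$. Moreover, $x_-(1,\nu)$ is increasing in $\nu$, $x_+(1,\nu)$ is decreasing in $\nu$, and the interval length $|\mathcal I(1,\nu)|=x_+(1,\nu)-x_-(1,\nu)$ is decreasing in $\nu$ and satisfies \[ |\mathcal I(1,\nu)|\;\ge\;(1-\gamma-c_{\delta'}\nu)-\frac{3\sqrt3}{2}\cdot\frac{c_\delta \nu}{c\sqrt{\,1-\gamma-c_{\delta'}\nu\,}}. \]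
   Context: Setting of iterative self-improvement for mathematical reasoning with binary verifiable reward; the previous result (Corollary 4.4) gives the high-probability lower bound $V_{p_0}(\hat\theta_{t+1})\ge F(V_{p_0}(\hat\theta_t))$ and its iterated version. *)

theory Defs
  imports Complex_Main
begin

definition cdelta :: "nat \<Rightarrow> real \<Rightarrow> real" where
  "cdelta N \<delta> = sqrt (2 * ln (real N / \<delta>))"

definition cdelta' :: "real \<Rightarrow> real" where
  "cdelta' \<delta>' = sqrt (ln (1 / \<delta>') / 2)"

text \<open>F(x) = 1 - gamma - c_delta nu / (c sqrt(x - c_delta' nu)), meant on x > c_delta' nu
  (outside that domain the value is the HOL-totalised one).\<close>
definition Fmap :: "real \<Rightarrow> real \<Rightarrow> real \<Rightarrow> real \<Rightarrow> real \<Rightarrow> real \<Rightarrow> real" where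
  "Fmap \<gamma> c cd cd' \<nu> x = 1 - \<gamma> - cd * \<nu> / (c * sqrt (x - cd' * \<nu>))"

definition fixpts :: "real \<Rightarrow> real \<Rightarrow> real \<Rightarrow> real \<Rightarrow> real \<Rightarrow> real set" where
  "fixpts \<gamma> c cd cd' \<nu> = {x. cd' * \<nu> < x \<and> Fmap \<gamma> c cd cd' \<nu> x = x}"

definition xminus :: "real \<Rightarrow> real \<Rightarrow> real \<Rightarrow> real \<Rightarrow> real \<Rightarrow> real" where
  "xminus \<gamma> c cd cd' \<nu> = Min (fixpts \<gamma> c cd cd' \<nu>)"

definition xplus :: "real \<Rightarrow> real \<Rightarrow> real \<Rightarrow> real \<Rightarrow> real \<Rightarrow> real" where
  "xplus \<gamma> c cd cd' \<nu> = Max (fixpts \<gamma> c cd cd' \<nu>)"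

definition nu_cond :: "real \<Rightarrow> real \<Rightarrow> real \<Rightarrow> real \<Rightarrow> real \<Rightarrow> bool" where
  "nu_cond \<gamma> c cd cd' \<nu> \<longleftrightarrow>
     0 < cd * \<nu> / (c * sqrt (1 - \<gamma> - cd' * \<nu>) ^ 3) \<and>
     cd * \<nu> / (c * sqrt (1 - \<gamma> - cd' * \<nu>) ^ 3) < 2 / (3 * sqrt 3)"

end

theory Submission
  imports Defs
begin

lemma cubic_roots:
  fixes L b :: real
  assumes L: "0 < L" and b: "0 < b" and small: "b * (3 * sqrt 3) < 2 * sqrt L ^ 3"
  obtains s1 s2 where "0 < s1" "s1 < s2" "s2^2 < L" "s1^2 + s1*s2 + s2^2 = L"
    "b = s1*s2*(s1+s2)"
proof -
  define r where "r = sqrt L"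
  have r: "0 < r" "r^2 = L" using L by (auto simp: r_def)
  define m where "m = r / sqrt 3"
  have s3: "sqrt 3 ^ 2 = (3::real)" "sqrt 3 > (0::real)" by auto
  have m: "0 < m" "m < r" using r s3 by (auto simp: m_def field_simps)
  have mL: "L = 3 * m^2" using r s3 by (simp add: m_def power_divide)
  have m3: "r^3 = m^3 * (3 * sqrt 3)"
  proof -
    have "r = m * sqrt 3" using s3 by (simp add: m_def)
    hence "r^3 = m^3 * (sqrt 3 ^ 2 * sqrt 3)" by (simp add: power3_eq_cube power2_eq_square)
    thus ?thesis using s3 by simp
  qed
  define G where "G s = s^3 - L*s + b" for s :: real
  have cont: "\<forall>x. isCont G x" unfolding G_def by (auto intro!: continuous_intros)
  have G0: "G 0 = b" by (simp add: G_def)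
  have Gm: "G m < 0"
  proof -
    have "G m = b - 2 * m^3" by (simp add: G_def mL power3_eq_cube power2_eq_square)
    moreover have "b < 2 * m^3"
    proof -
      have "b*(3*sqrt 3) < (2*m^3)*(3*sqrt 3)" using small m3 unfolding r_def[symmetric] by simp
      thus ?thesis using s3 by (simp add: mult_less_cancel_right)
    qed
    ultimately show ?thesis by simp
  qed
  have Gr: "G r = b" using r by (simp add: G_def power3_eq_cube power2_eq_square)
  obtain s1 where s1: "0 \<le> s1" "s1 \<le> m" "G s1 = 0"
    using IVT2[of G m 0 0] Gm G0 b m cont by force
  obtain s2 where s2: "m \<le> s2" "s2 \<le> r" "G s2 = 0"
    using IVT[of G m 0 r] Gm Gr b m cont by force
  have s1': "0 < s1" "s1 < m" using s1 G0 Gm b by (auto simp: order.order_iff_strict)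
  have s2': "m < s2" "s2 < r" using s2 Gr Gm b by (auto simp: order.order_iff_strict)
  have "(s1 - s2) * (s1^2 + s1*s2 + s2^2 - L) = G s1 - G s2"
    by (simp add: G_def algebra_simps power2_eq_square power3_eq_cube)
  hence sum: "s1^2 + s1*s2 + s2^2 = L" using s1 s2 s1' s2' by simp
  have bb: "b = s1*s2*(s1+s2)"
  proof -
    have "b = L*s1 - s1^3" using s1(3) by (simp add: G_def)
    also have "\<dots> = s1*s2*(s1+s2)" unfolding sum[symmetric]
      by (simp add: algebra_simps power2_eq_square power3_eq_cube)
    finally show ?thesis .
  qed
  have s2L: "s2^2 < L" using s2' s1' m r(2)
    by (metis less_trans power_strict_mono zero_less_two pos2 less_imp_le)
  show ?thesis by (rule that[of s1 s2]) (use s1' s2' sum bb s2L in auto)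
qed

lemma sq_less_iff: "0 \<le> (u::real) \<Longrightarrow> 0 \<le> v \<Longrightarrow> (u^2 < v^2) = (u < v)"
  using power_less_imp_less_base[of u 2 v] power_strict_mono[of u v 2] by auto

lemma core:
  fixes g c cd cd' nu :: real
  assumes c: "0 < c" and nu: "0 < nu" and cd: "0 < cd" and nc: "nu_cond g c cd cd' nu"
  obtains s1 s2 where "0<s1" "s1<s2" "s2^2 < 1 - g - cd'*nu"
   "s1^2+s1*s2+s2^2 = 1-g-cd'*nu" "cd*nu/c = s1*s2*(s1+s2)"
   "fixpts g c cd cd' nu = {cd'*nu+s1^2, cd'*nu+s2^2}"
   "xminus g c cd cd' nu = cd'*nu+s1^2" "xplus g c cd cd' nu = cd'*nu+s2^2"
   "\<And>x. cd'*nu < x \<Longrightarrow> (x < Fmap g c cd cd' nu x \<longleftrightarrow> cd'*nu+s1^2 < x \<and> x < cd'*nu+s2^2)"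
   "\<And>x. cd'*nu < x \<Longrightarrow> (x = Fmap g c cd cd' nu x \<longleftrightarrow> x = cd'*nu+s1^2 \<or> x = cd'*nu+s2^2)"
   "\<And>x y. cd'*nu < x \<Longrightarrow> x < y \<Longrightarrow> Fmap g c cd cd' nu x < Fmap g c cd cd' nu y"
   "\<And>x. x \<le> cd'*nu \<Longrightarrow> 1 - g \<le> Fmap g c cd cd' nu x"
proof -
  define a where "a = cd'*nu"
  define L where "L = 1 - g - cd'*nu"
  define b where "b = cd*nu/c"
  define r where "r = sqrt L"
  have b: "0 < b" using c nu cd by (simp add: b_def)
  have P: "0 < cd*nu/(c*r^3)" and Q: "cd*nu/(c*r^3) < 2/(3*sqrt 3)"
    using nc by (auto simp: nu_cond_def r_def L_def)
  have "r \<noteq> 0" using P by auto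
  moreover have "\<not> r < 0"
  proof
    assume "r < 0"
    hence "c*r^3 < 0" using c by (simp add: mult_pos_neg odd_power_less_zero)
    hence "cd*nu/(c*r^3) < 0" using cd nu by (simp add: divide_pos_neg)
    thus False using P by simp
  qed
  ultimately have r: "0 < r" by simp
  hence L: "0 < L" by (simp add: r_def)
  have eqb: "cd*nu/(c*r^3) = b/r^3" by (simp add: b_def)
  have small: "b * (3 * sqrt 3) < 2 * sqrt L ^ 3"
  proof -
    have "b/r^3 < 2/(3*sqrt 3)" using Q eqb by simp
    thus ?thesis using r unfolding r_def[symmetric] by (simp add: field_simps)
  qed
  obtain s1 s2 where s: "0 < s1" "s1 < s2" "s2^2 < L" "s1^2 + s1*s2 + s2^2 = L"
    "b = s1*s2*(s1+s2)"
    using cubic_roots[OF L b small] by blast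
  have Gfac: "s^3 - L*s + b = (s-s1)*(s-s2)*(s+s1+s2)" for s
    unfolding s(5) s(4)[symmetric] by (simp add: algebra_simps power2_eq_square power3_eq_cube)
  have Fx: "Fmap g c cd cd' nu x - x = - ((sqrt (x-a))^3 - L*sqrt (x-a) + b) / sqrt (x-a)"
    if "a < x" for x
  proof -
    define t where "t = sqrt (x-a)"
    have t: "0 < t" "t^2 = x - a" using that by (auto simp: t_def)
    have xe: "x = a + t^2" using t by simp
    have "Fmap g c cd cd' nu x = 1 - g - b/t" by (simp add: Fmap_def b_def t_def a_def)
    also have "\<dots> - x = -(t^3 - L*t + b)/t" using t(1)
      by (simp add: xe field_simps L_def a_def power2_eq_square power3_eq_cube)
    finally show ?thesis by (simp add: t_def)
  qed
  have Fform: "Fmap g c cd cd' nu x = 1 - g - b / sqrt (x-a)" for x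
    by (simp add: Fmap_def b_def a_def)
  have char: "(x < Fmap g c cd cd' nu x \<longleftrightarrow> a+s1^2 < x \<and> x < a+s2^2)
     \<and> (x = Fmap g c cd cd' nu x \<longleftrightarrow> x = a+s1^2 \<or> x = a+s2^2)" if "a < x" for x
  proof -
    define t where "t = sqrt (x-a)"
    have t: "0 < t" "t^2 = x - a" using that by (auto simp: t_def)
    have xe: "x = a + t^2" using t by simp
    have pos: "0 < t+s1+s2" using t s by simp
    have e: "Fmap g c cd cd' nu x - x = -((t-s1)*(t-s2)*(t+s1+s2))/t"
      using Fx[OF that] Gfac[of t] unfolding t_def[symmetric] by (metis minus_divide_left)
    have "x < Fmap g c cd cd' nu x \<longleftrightarrow> 0 < -((t-s1)*(t-s2)*(t+s1+s2))/t" using e by linarith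
    also have "\<dots> \<longleftrightarrow> (t-s1)*(t-s2)*(t+s1+s2) < 0" using t(1)
      by (simp add: divide_less_0_iff)
    also have "\<dots> \<longleftrightarrow> (t-s1)*(t-s2) < 0" using pos by (simp add: mult_less_0_iff)
    also have "\<dots> \<longleftrightarrow> s1 < t \<and> t < s2" using s(2) by (auto simp: mult_less_0_iff)
    also have "\<dots> \<longleftrightarrow> s1^2 < t^2 \<and> t^2 < s2^2" using sq_less_iff[of s1 t] sq_less_iff[of t s2] s(1,2) t(1) by auto
    also have "\<dots> \<longleftrightarrow> a+s1^2 < x \<and> x < a+s2^2" using xe by auto
    finally have A: "x < Fmap g c cd cd' nu x \<longleftrightarrow> a+s1^2 < x \<and> x < a+s2^2" .
    have "x = Fmap g c cd cd' nu x \<longleftrightarrow> (t-s1)*(t-s2)*(t+s1+s2) = 0" using e t(1) by auto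
    also have "\<dots> \<longleftrightarrow> t = s1 \<or> t = s2" using pos by auto
    also have "\<dots> \<longleftrightarrow> t^2 = s1^2 \<or> t^2 = s2^2" using power2_eq_iff_nonneg[of t s1] power2_eq_iff_nonneg[of t s2] s(1,2) t(1) by auto
    also have "\<dots> \<longleftrightarrow> x = a+s1^2 \<or> x = a+s2^2" using xe by auto
    finally show ?thesis using A by blast
  qed
  have fp: "fixpts g c cd cd' nu = {a+s1^2, a+s2^2}"
  proof -
    have c2: "Fmap g c cd cd' nu x = x \<longleftrightarrow> x = a+s1^2 \<or> x = a+s2^2" if "a < x" for x
      using char[OF that] by (metis (mono_tags))
    have "a < a + s1^2" "a < a+s2^2" using s by auto
    thus ?thesis unfolding fixpts_def a_def[symmetric] using c2 by blast
  qed
  have lt: "a+s1^2 < a+s2^2" using s by (simp add: sq_less_iff)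
  have xm: "xminus g c cd cd' nu = a+s1^2" using lt by (simp add: xminus_def fp)
  have xp: "xplus g c cd cd' nu = a+s2^2" using lt by (simp add: xplus_def fp)
  have mono: "Fmap g c cd cd' nu x < Fmap g c cd cd' nu y" if "a < x" "x < y" for x y
  proof -
    have "0 < sqrt (x-a)" "sqrt (x-a) < sqrt (y-a)" using that by auto
    hence "b / sqrt (y-a) < b / sqrt (x-a)" using b by (simp add: divide_strict_left_mono)
    thus ?thesis by (simp add: Fform)
  qed
  have low: "1 - g \<le> Fmap g c cd cd' nu x" if "x \<le> a" for x
  proof -
    have "sqrt (x-a) \<le> 0" using that by simp
    hence "b / sqrt (x-a) \<le> 0" using b by (simp add: divide_nonneg_nonpos)
    thus ?thesis by (simp add: Fform)
  qed
  show ?thesis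
    apply (rule that[of s1 s2])
    using s fp xm xp char mono low by (simp_all add: a_def L_def b_def)
qed

lemma len_bound:
  fixes s1 s2 :: real
  assumes "0 < s1" "s1 < s2"
  shows "(s1^2+s1*s2+s2^2) - 3 * sqrt 3 / 2 * (s1*s2*(s1+s2) / sqrt (s1^2+s1*s2+s2^2))
         \<le> s2^2 - s1^2"
proof -
  define L where "L = s1^2+s1*s2+s2^2"
  define r where "r = sqrt L"
  define k where "k = 3 * sqrt 3 / (2::real)"
  have L: "0 < L" using assms by (simp add: L_def add_pos_pos)
  have r: "0 < r" "r^2 = L" using L by (auto simp: r_def)
  have k2: "k^2 = 27/4" by (simp add: k_def power_divide power_mult_distrib)
  have k: "0 < k" by (simp add: k_def)
  have poly: "27/4 * (s2*(s1+s2))^2 - (2*s1+s2)^2 * L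
      = (s2-s1)*(16*s1^3+48*s1^2*s2+57*s1*s2^2+23*s2^3)/4"
    by (simp add: L_def algebra_simps power2_eq_square power3_eq_cube)
  have "0 \<le> (s2-s1)*(16*s1^3+48*s1^2*s2+57*s1*s2^2+23*s2^3)/4"
    using assms by (intro divide_nonneg_pos mult_nonneg_nonneg) auto
  hence B: "(2*s1+s2)^2 * L \<le> 27/4 * (s2*(s1+s2))^2" using poly by linarith
  have "((2*s1+s2)*r)^2 = (2*s1+s2)^2 * L" using r by (simp add: power_mult_distrib)
  moreover have "(k*(s2*(s1+s2)))^2 = 27/4 * (s2*(s1+s2))^2" using k2 by (simp add: power_mult_distrib)
  ultimately have "((2*s1+s2)*r)^2 \<le> (k*(s2*(s1+s2)))^2" using B by (simp only:)
  moreover have "0 \<le> k*(s2*(s1+s2))" using k assms by simp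
  ultimately have A: "(2*s1+s2)*r \<le> k*(s2*(s1+s2))" by (rule power2_le_imp_le)
  have ineq: "s1*((2*s1+s2)*r) \<le> s1*(k*(s2*(s1+s2)))" using A assms(1) by (intro mult_left_mono) auto
  have e1: "s1*(2*s1+s2)*r = s1*((2*s1+s2)*r)" by (simp only: mult.assoc)
  have e2: "k*(s1*s2*(s1+s2)) = s1*(k*(s2*(s1+s2)))" by (simp only: mult_ac)
  have "s1*(2*s1+s2)*r \<le> k*(s1*s2*(s1+s2))" unfolding e1 e2 by (rule ineq)
  hence "s1*(2*s1+s2) \<le> k*(s1*s2*(s1+s2))/r" using r by (simp add: pos_le_divide_eq)
  moreover have "L - s1*(2*s1+s2) = s2^2 - s1^2" by (simp add: L_def algebra_simps power2_eq_square)
  moreover have "k*(s1*s2*(s1+s2))/r = k*(s1*s2*(s1+s2)/r)" by simp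
  ultimately show ?thesis unfolding L_def[symmetric] r_def[symmetric] k_def[symmetric] by linarith
qed

theorem proposition4p5:
  fixes \<Pi> :: "'m set" and \<delta> \<delta>' \<gamma> c \<nu> v0 :: real
  assumes "finite \<Pi>" and "\<Pi> \<noteq> {}"
    and "0 < \<delta>" and "\<delta> < 1" and "0 < \<delta>'" and "\<delta>' < 1"
    and "0 < c" and "c < 1" and "0 \<le> \<gamma>"
    and "0 < \<nu>"
    and "nu_cond \<gamma> c (cdelta (card \<Pi>) \<delta>) (cdelta' \<delta>') \<nu>"
    and "0 \<le> v0" and "v0 \<le> 1"
  shows
    "fixpts \<gamma> c (cdelta (card \<Pi>) \<delta>) (cdelta' \<delta>') \<nu>
        = {xminus \<gamma> c (cdelta (card \<Pi>) \<delta>) (cdelta' \<delta>') \<nu>,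
           xplus \<gamma> c (cdelta (card \<Pi>) \<delta>) (cdelta' \<delta>') \<nu>}
     \<and> cdelta' \<delta>' * \<nu> < xminus \<gamma> c (cdelta (card \<Pi>) \<delta>) (cdelta' \<delta>') \<nu>
     \<and> xminus \<gamma> c (cdelta (card \<Pi>) \<delta>) (cdelta' \<delta>') \<nu>
         < xplus \<gamma> c (cdelta (card \<Pi>) \<delta>) (cdelta' \<delta>') \<nu>
     \<and> xplus \<gamma> c (cdelta (card \<Pi>) \<delta>) (cdelta' \<delta>') \<nu> < 1 - \<gamma>
     \<and> (\<forall>t::nat.
          ((Fmap \<gamma> c (cdelta (card \<Pi>) \<delta>) (cdelta' \<delta>') \<nu> ^^ t) v0
              < (Fmap \<gamma> c (cdelta (card \<Pi>) \<delta>) (cdelta' \<delta>') \<nu> ^^ Suc t) v0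
           \<and> (Fmap \<gamma> c (cdelta (card \<Pi>) \<delta>) (cdelta' \<delta>') \<nu> ^^ t) v0
               \<in> {xminus \<gamma> c (cdelta (card \<Pi>) \<delta>) (cdelta' \<delta>') \<nu> <..<
                   xplus \<gamma> c (cdelta (card \<Pi>) \<delta>) (cdelta' \<delta>') \<nu>})
          \<longleftrightarrow> v0 \<in> {xminus \<gamma> c (cdelta (card \<Pi>) \<delta>) (cdelta' \<delta>') \<nu> <..<
                    xplus \<gamma> c (cdelta (card \<Pi>) \<delta>) (cdelta' \<delta>') \<nu>})
     \<and> (\<forall>\<nu>1 \<nu>2. 0 < \<nu>1 \<longrightarrow> \<nu>1 < \<nu>2
          \<longrightarrow> nu_cond \<gamma> c (cdelta (card \<Pi>) \<delta>) (cdelta' \<delta>') \<nu>1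
          \<longrightarrow> nu_cond \<gamma> c (cdelta (card \<Pi>) \<delta>) (cdelta' \<delta>') \<nu>2
          \<longrightarrow> xminus \<gamma> c (cdelta (card \<Pi>) \<delta>) (cdelta' \<delta>') \<nu>1
                < xminus \<gamma> c (cdelta (card \<Pi>) \<delta>) (cdelta' \<delta>') \<nu>2
            \<and> xplus \<gamma> c (cdelta (card \<Pi>) \<delta>) (cdelta' \<delta>') \<nu>2
                < xplus \<gamma> c (cdelta (card \<Pi>) \<delta>) (cdelta' \<delta>') \<nu>1
            \<and> xplus \<gamma> c (cdelta (card \<Pi>) \<delta>) (cdelta' \<delta>') \<nu>2
                - xminus \<gamma> c (cdelta (card \<Pi>) \<delta>) (cdelta' \<delta>') \<nu>2
              < xplus \<gamma> c (cdelta (card \<Pi>) \<delta>) (cdelta' \<delta>') \<nu>1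
                - xminus \<gamma> c (cdelta (card \<Pi>) \<delta>) (cdelta' \<delta>') \<nu>1)
     \<and> xplus \<gamma> c (cdelta (card \<Pi>) \<delta>) (cdelta' \<delta>') \<nu>
         - xminus \<gamma> c (cdelta (card \<Pi>) \<delta>) (cdelta' \<delta>') \<nu>
       \<ge> (1 - \<gamma> - cdelta' \<delta>' * \<nu>)
         - 3 * sqrt 3 / 2 * (cdelta (card \<Pi>) \<delta> * \<nu>
              / (c * sqrt (1 - \<gamma> - cdelta' \<delta>' * \<nu>)))"
proof -
  define cd where "cd = cdelta (card \<Pi>) \<delta>"
  define cd' where "cd' = cdelta' \<delta>'"
  have cd: "0 < cd"
  proof -
    have "1 \<le> real (card \<Pi>)" using assms(1,2) by (simp add: Suc_le_eq card_gt_0_iff)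
    hence "1 < real (card \<Pi>) / \<delta>" using assms(3,4) by (simp add: field_simps)
    thus ?thesis by (simp add: cd_def cdelta_def)
  qed
  have cd': "0 \<le> cd'"
  proof -
    have "1 \<le> 1/\<delta>'" using assms(5,6) by simp
    hence "0 \<le> ln (1/\<delta>')" by (rule ln_ge_zero)
    thus ?thesis by (simp add: cd'_def cdelta'_def)
  qed
  note nc = assms(11)[folded cd_def cd'_def]
  let ?F = "Fmap \<gamma> c cd cd' \<nu>"
  let ?xm = "xminus \<gamma> c cd cd' \<nu>"
  let ?xp = "xplus \<gamma> c cd cd' \<nu>"
  obtain s1 s2 where s: "0<s1" "s1<s2" "s2^2 < 1 - \<gamma> - cd'*\<nu>"
   "s1^2+s1*s2+s2^2 = 1-\<gamma>-cd'*\<nu>" "cd*\<nu>/c = s1*s2*(s1+s2)"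
   "fixpts \<gamma> c cd cd' \<nu> = {cd'*\<nu>+s1^2, cd'*\<nu>+s2^2}"
   "?xm = cd'*\<nu>+s1^2" "?xp = cd'*\<nu>+s2^2"
   and ch: "\<And>x. cd'*\<nu> < x \<Longrightarrow> (x < ?F x \<longleftrightarrow> cd'*\<nu>+s1^2 < x \<and> x < cd'*\<nu>+s2^2)"
   and ch2: "\<And>x. cd'*\<nu> < x \<Longrightarrow> (x = ?F x \<longleftrightarrow> x = cd'*\<nu>+s1^2 \<or> x = cd'*\<nu>+s2^2)"
   and mono: "\<And>x y. cd'*\<nu> < x \<Longrightarrow> x < y \<Longrightarrow> ?F x < ?F y"
   and low: "\<And>x. x \<le> cd'*\<nu> \<Longrightarrow> 1 - \<gamma> \<le> ?F x"
    using core[OF assms(7) assms(10) cd nc] by blast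
  have s1s2: "s1^2 < s2^2" using s(1,2) by (simp add: sq_less_iff)
  have P1: "fixpts \<gamma> c cd cd' \<nu> = {?xm, ?xp}" using s by simp
  have P2: "cd'*\<nu> < ?xm" using s by simp
  have P3: "?xm < ?xp" using s s1s2 by simp
  have P4: "?xp < 1 - \<gamma>" using s by simp
  have Fxm: "?F ?xm = ?xm" using ch2[OF P2] s(7) by metis
  have Fxp: "?F ?xp = ?xp" using ch2[of ?xp] P2 P3 s(8) by (metis less_trans)
  have fwd: "x < ?F x \<and> ?F x \<in> {?xm<..<?xp}" if "x \<in> {?xm<..<?xp}" for x
  proof -
    have xa: "cd'*\<nu> < x" using that P2 by simp
    have "x < ?F x" using ch[OF xa] that s(7,8) by simp
    moreover have "?F x < ?xp" using mono[OF xa, of ?xp] that Fxp by simp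
    ultimately show ?thesis using that by simp
  qed
  have bwd: "x \<in> {?xm<..<?xp}" if "?F x \<in> {?xm<..<?xp}" for x
  proof (cases "x \<le> cd'*\<nu>")
    case True
    thus ?thesis using low[OF True] that P4 by simp
  next
    case False
    hence xa: "cd'*\<nu> < x" by simp
    have "\<not> x \<le> ?xm"
    proof
      assume h: "x \<le> ?xm"
      have "?F x \<le> ?xm"
      proof (cases "x = ?xm")
        case True thus ?thesis using Fxm by simp
      next
        case False thus ?thesis using mono[OF xa, of ?xm] h Fxm by simp
      qed
      thus False using that by simp
    qed
    moreover have "\<not> ?xp \<le> x"
    proof
      assume h: "?xp \<le> x"
      have "?xp \<le> ?F x"
      proof (cases "x = ?xp")
        case True thus ?thesis using Fxp by simp
      next
        case False thus ?thesis using mono[of ?xp x] h Fxp P2 P3 by simp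
      qed
      thus False using that by simp
    qed
    ultimately show ?thesis by simp
  qed
  have iter: "(?F ^^ t) v0 \<in> {?xm<..<?xp} \<longleftrightarrow> v0 \<in> {?xm<..<?xp}" for t
  proof (induction t)
    case 0 thus ?case by simp
  next
    case (Suc t)
    have e: "(?F^^Suc t) v0 = ?F ((?F^^t) v0)" by simp
    show ?case
    proof
      assume "(?F^^Suc t) v0 \<in> {?xm<..<?xp}"
      hence "(?F^^t) v0 \<in> {?xm<..<?xp}" unfolding e by (rule bwd)
      thus "v0 \<in> {?xm<..<?xp}" using Suc by blast
    next
      assume "v0 \<in> {?xm<..<?xp}"
      hence "(?F^^t) v0 \<in> {?xm<..<?xp}" using Suc by blast
      thus "(?F^^Suc t) v0 \<in> {?xm<..<?xp}" unfolding e using fwd by blast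
    qed
  qed
  have P5: "\<forall>t::nat. ((?F ^^ t) v0 < (?F ^^ Suc t) v0 \<and> (?F ^^ t) v0 \<in> {?xm<..<?xp})
            \<longleftrightarrow> v0 \<in> {?xm<..<?xp}"
  proof
    fix t :: nat
    show "((?F ^^ t) v0 < (?F ^^ Suc t) v0 \<and> (?F ^^ t) v0 \<in> {?xm<..<?xp})
            \<longleftrightarrow> v0 \<in> {?xm<..<?xp}"
    proof
      assume "(?F ^^ t) v0 < (?F ^^ Suc t) v0 \<and> (?F ^^ t) v0 \<in> {?xm<..<?xp}"
      thus "v0 \<in> {?xm<..<?xp}" using iter[of t] by blast
    next
      assume "v0 \<in> {?xm<..<?xp}"
      hence h: "(?F ^^ t) v0 \<in> {?xm<..<?xp}" using iter[of t] by blast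
      have e: "(?F^^Suc t) v0 = ?F ((?F^^t) v0)" by simp
      show "(?F ^^ t) v0 < (?F ^^ Suc t) v0 \<and> (?F ^^ t) v0 \<in> {?xm<..<?xp}"
        unfolding e using fwd[OF h] h by blast
    qed
  qed
  have P6: "\<forall>\<nu>1 \<nu>2. 0 < \<nu>1 \<longrightarrow> \<nu>1 < \<nu>2
          \<longrightarrow> nu_cond \<gamma> c cd cd' \<nu>1 \<longrightarrow> nu_cond \<gamma> c cd cd' \<nu>2
          \<longrightarrow> xminus \<gamma> c cd cd' \<nu>1 < xminus \<gamma> c cd cd' \<nu>2
            \<and> xplus \<gamma> c cd cd' \<nu>2 < xplus \<gamma> c cd cd' \<nu>1
            \<and> xplus \<gamma> c cd cd' \<nu>2 - xminus \<gamma> c cd cd' \<nu>2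
              < xplus \<gamma> c cd cd' \<nu>1 - xminus \<gamma> c cd cd' \<nu>1"
  proof (intro allI impI)
    fix \<nu>1 \<nu>2 :: real
    assume n1: "0 < \<nu>1" and n12: "\<nu>1 < \<nu>2" and c1: "nu_cond \<gamma> c cd cd' \<nu>1"
      and c2: "nu_cond \<gamma> c cd cd' \<nu>2"
    have n2: "0 < \<nu>2" using n1 n12 by simp
    obtain u1 u2 where u: "0<u1" "u1<u2" "u2^2 < 1 - \<gamma> - cd'*\<nu>1"
     "u1^2+u1*u2+u2^2 = 1-\<gamma>-cd'*\<nu>1" "cd*\<nu>1/c = u1*u2*(u1+u2)"
     "fixpts \<gamma> c cd cd' \<nu>1 = {cd'*\<nu>1+u1^2, cd'*\<nu>1+u2^2}"
     "xminus \<gamma> c cd cd' \<nu>1 = cd'*\<nu>1+u1^2" "xplus \<gamma> c cd cd' \<nu>1 = cd'*\<nu>1+u2^2"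
     and chu: "\<And>x. cd'*\<nu>1 < x \<Longrightarrow> (x < Fmap \<gamma> c cd cd' \<nu>1 x \<longleftrightarrow> cd'*\<nu>1+u1^2 < x \<and> x < cd'*\<nu>1+u2^2)"
     and ch2u: "\<And>x. cd'*\<nu>1 < x \<Longrightarrow> (x = Fmap \<gamma> c cd cd' \<nu>1 x \<longleftrightarrow> x = cd'*\<nu>1+u1^2 \<or> x = cd'*\<nu>1+u2^2)"
     and monou: "\<And>x y. cd'*\<nu>1 < x \<Longrightarrow> x < y \<Longrightarrow> Fmap \<gamma> c cd cd' \<nu>1 x < Fmap \<gamma> c cd cd' \<nu>1 y"
     and lowu: "\<And>x. x \<le> cd'*\<nu>1 \<Longrightarrow> 1 - \<gamma> \<le> Fmap \<gamma> c cd cd' \<nu>1 x"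
      using core[OF assms(7) n1 cd c1] by blast
    obtain w1 w2 where w: "0<w1" "w1<w2" "w2^2 < 1 - \<gamma> - cd'*\<nu>2"
     "w1^2+w1*w2+w2^2 = 1-\<gamma>-cd'*\<nu>2" "cd*\<nu>2/c = w1*w2*(w1+w2)"
     "fixpts \<gamma> c cd cd' \<nu>2 = {cd'*\<nu>2+w1^2, cd'*\<nu>2+w2^2}"
     "xminus \<gamma> c cd cd' \<nu>2 = cd'*\<nu>2+w1^2" "xplus \<gamma> c cd cd' \<nu>2 = cd'*\<nu>2+w2^2"
     and chw: "\<And>x. cd'*\<nu>2 < x \<Longrightarrow> (x < Fmap \<gamma> c cd cd' \<nu>2 x \<longleftrightarrow> cd'*\<nu>2+w1^2 < x \<and> x < cd'*\<nu>2+w2^2)"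
     and ch2w: "\<And>x. cd'*\<nu>2 < x \<Longrightarrow> (x = Fmap \<gamma> c cd cd' \<nu>2 x \<longleftrightarrow> x = cd'*\<nu>2+w1^2 \<or> x = cd'*\<nu>2+w2^2)"
     and monow: "\<And>x y. cd'*\<nu>2 < x \<Longrightarrow> x < y \<Longrightarrow> Fmap \<gamma> c cd cd' \<nu>2 x < Fmap \<gamma> c cd cd' \<nu>2 y"
     and loww: "\<And>x. x \<le> cd'*\<nu>2 \<Longrightarrow> 1 - \<gamma> \<le> Fmap \<gamma> c cd cd' \<nu>2 x"
      using core[OF assms(7) n2 cd c2] by blast
    have a12: "cd'*\<nu>1 \<le> cd'*\<nu>2" using cd' n12 by (simp add: mult_left_mono)
    have cmp: "Fmap \<gamma> c cd cd' \<nu>2 x < Fmap \<gamma> c cd cd' \<nu>1 x" if "cd'*\<nu>2 < x" for x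
    proof -
      have q: "0 < sqrt (x - cd'*\<nu>2)" "sqrt (x - cd'*\<nu>2) \<le> sqrt (x - cd'*\<nu>1)"
        using that a12 by auto
      have "cd*\<nu>1/(c*sqrt (x - cd'*\<nu>1)) < cd*\<nu>2/(c*sqrt (x - cd'*\<nu>2))"
        using q cd n1 n12 assms(7) by (intro frac_less) (auto intro: mult_left_mono)
      thus ?thesis by (simp add: Fmap_def)
    qed
    have in1: "xminus \<gamma> c cd cd' \<nu>1 < x \<and> x < xplus \<gamma> c cd cd' \<nu>1"
      if "x = cd'*\<nu>2+w1^2 \<or> x = cd'*\<nu>2+w2^2" for x
    proof -
      have xa: "cd'*\<nu>2 < x" using that w(1,2) by auto
      have "x = Fmap \<gamma> c cd cd' \<nu>2 x" using ch2w[OF xa] that by simp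
      hence "x < Fmap \<gamma> c cd cd' \<nu>1 x" using cmp[OF xa] by simp
      thus ?thesis using chu[of x] xa a12 u(7,8) by simp
    qed
    have "xminus \<gamma> c cd cd' \<nu>1 < xminus \<gamma> c cd cd' \<nu>2" using in1[of "cd'*\<nu>2+w1^2"] w(7) by simp
    moreover have "xplus \<gamma> c cd cd' \<nu>2 < xplus \<gamma> c cd cd' \<nu>1" using in1[of "cd'*\<nu>2+w2^2"] w(8) by simp
    ultimately show "xminus \<gamma> c cd cd' \<nu>1 < xminus \<gamma> c cd cd' \<nu>2
            \<and> xplus \<gamma> c cd cd' \<nu>2 < xplus \<gamma> c cd cd' \<nu>1
            \<and> xplus \<gamma> c cd cd' \<nu>2 - xminus \<gamma> c cd cd' \<nu>2
              < xplus \<gamma> c cd cd' \<nu>1 - xminus \<gamma> c cd cd' \<nu>1" by simp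
  qed
  have P7: "?xp - ?xm \<ge> (1 - \<gamma> - cd' * \<nu>) - 3 * sqrt 3 / 2 * (cd * \<nu> / (c * sqrt (1 - \<gamma> - cd' * \<nu>)))"
  proof -
    have "cd * \<nu> / (c * sqrt (1 - \<gamma> - cd' * \<nu>)) = (cd*\<nu>/c) / sqrt (1 - \<gamma> - cd' * \<nu>)" by simp
    hence "(1 - \<gamma> - cd' * \<nu>) - 3 * sqrt 3 / 2 * (cd * \<nu> / (c * sqrt (1 - \<gamma> - cd' * \<nu>)))
      = (s1^2+s1*s2+s2^2) - 3 * sqrt 3 / 2 * (s1*s2*(s1+s2) / sqrt (s1^2+s1*s2+s2^2))"
      using s(4,5) by simp
    also have "\<dots> \<le> s2^2 - s1^2" using len_bound[OF s(1,2)] .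
    also have "\<dots> = ?xp - ?xm" using s(7,8) by simp
    finally show ?thesis .
  qed
  show ?thesis unfolding cd_def[symmetric] cd'_def[symmetric]
    using P1 P2 P3 P4 P5 P6 P7 by blast
qed

end
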